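(* If $C$ is a self-dual code over $\mathbb{Z}_4+u\mathbb{Z}_4$ generated by a matrix of the form $[I_n\,|\,A]$ (with $A$ an $n\times n$ matrix over $\mathbb{Z}_4+u\mathbb{Z}_4$), then $\mu(C)$ is self-dual over $\mathbb{Z}_4$ and $\alpha(C)$ is self-dual over $\mathbb{F}_2+u\mathbb{F}_2$.
   Context: $\mathbb{Z}_4+u\mathbb{Z}_4$ is the commutative ring of characteristic $4$ with $u^2=0$; $\mathbb{F}_2+u\mathbb{F}_2$ is the commutative ring $\{0,1,u,1+u\}$ of characteristic $2$ with $u^2=0$. A linear code over a ring $R$ is an $R$-submodule of $R^N$; duals are taken with respect to the Euclidean inner product $\sum_i x_iy_i$ in $R$; self-dual means $C=C^\perp$. For $\overline{a},\overline{b}\in\mathbb{Z}_4^N$, $\mu(\overline{a}+u\overline{b})=\overline{a}$; $\alpha$ is coordinatewise reduction modulo $2$ from $\mathbb{Z}_4+u\mathbb{Z}_4$ to $\mathbb{F}_2+u\mathbb{F}_2$. *)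

theory Defs
  imports Main "HOL-Library.Numeral_Type"
begin

text \<open>The ring R + uR with u^2 = 0 (dual numbers over a commutative ring R).
  Dual a b stands for a + u b.  Z4 + uZ4 is 4 dnum, F2 + uF2 is 2 dnum.\<close>

datatype 'a dnum = Dual (re: 'a) (im: 'a)

instantiation dnum :: (comm_ring_1) comm_ring_1
begin
definition "0 = Dual 0 0"
definition "1 = Dual 1 0"
definition "x + y = Dual (re x + re y) (im x + im y)"
definition "x - y = Dual (re x - re y) (im x - im y)"
definition "- x = Dual (- re x) (- im x)"
definition "x * y = Dual (re x * re y) (re x * im y + im x * re y)"
instance
  by standard (auto simp: zero_dnum_def one_dnum_def plus_dnum_def minus_dnum_def
      uminus_dnum_def times_dnum_def algebra_simps intro: dnum.expand)
end

definition vecs :: "nat \<Rightarrow> (nat \<Rightarrow> 'a::zero) set" where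
  "vecs N = {x. \<forall>i\<ge>N. x i = 0}"

definition inner_prod :: "nat \<Rightarrow> (nat \<Rightarrow> 'a::comm_ring_1) \<Rightarrow> (nat \<Rightarrow> 'a) \<Rightarrow> 'a" where
  "inner_prod N x y = (\<Sum>i<N. x i * y i)"

definition dual_code :: "nat \<Rightarrow> (nat \<Rightarrow> 'a::comm_ring_1) set \<Rightarrow> (nat \<Rightarrow> 'a) set" where
  "dual_code N C = {y \<in> vecs N. \<forall>x\<in>C. inner_prod N x y = 0}"

definition self_dual :: "nat \<Rightarrow> (nat \<Rightarrow> 'a::comm_ring_1) set \<Rightarrow> bool" where
  "self_dual N C \<longleftrightarrow> C = dual_code N C"

definition gen_row :: "nat \<Rightarrow> (nat \<Rightarrow> nat \<Rightarrow> 'a::comm_ring_1) \<Rightarrow> nat \<Rightarrow> nat \<Rightarrow> 'a" where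
  "gen_row n A i j = (if j < n then (if j = i then 1 else 0)
                      else if j < 2 * n then A i (j - n) else 0)"

definition gen_code :: "nat \<Rightarrow> (nat \<Rightarrow> nat \<Rightarrow> 'a::comm_ring_1) \<Rightarrow> (nat \<Rightarrow> 'a) set" where
  "gen_code n A = {(\<lambda>j. \<Sum>i<n. c i * gen_row n A i j) | c. True}"

definition mu :: "(nat \<Rightarrow> 4 dnum) \<Rightarrow> (nat \<Rightarrow> 4)" where
  "mu x = (\<lambda>j. re (x j))"

definition red2 :: "4 \<Rightarrow> 2" where
  "red2 a = of_int (Rep_bit0 a)"

definition alpha :: "(nat \<Rightarrow> 4 dnum) \<Rightarrow> (nat \<Rightarrow> 2 dnum)" where
  "alpha x = (\<lambda>j. Dual (red2 (re (x j))) (red2 (im (x j))))"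

end

theory Submission
  imports Defs
begin

lemma sum_delta_l: "k < (n::nat) \<Longrightarrow> (\<Sum>i<n. (if i = k then 1 else 0) * f i) = (f k :: 'a::comm_ring_1)"
proof -
  assume k: "k < n"
  have "(\<Sum>i<n. (if i = k then 1 else 0) * f i) = (\<Sum>i<n. if i = k then f i else 0)"
    by (rule sum.cong) auto
  also have "\<dots> = f k" using k by (subst sum.delta[OF finite_lessThan]) simp
  finally show ?thesis .
qed

lemma sum_delta_r: "k < (n::nat) \<Longrightarrow> (\<Sum>i<n. f i * (if i = k then 1 else 0)) = (f k :: 'a::comm_ring_1)"
  using sum_delta_l[of k n f] by (simp add: mult.commute)

lemma sum_delta_l': "k < (n::nat) \<Longrightarrow> (\<Sum>i<n. (if k = i then 1 else 0) * f i) = (f k :: 'a::comm_ring_1)"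
  using sum_delta_l[of k n f] by (simp add: eq_commute)

lemma sum_delta_r': "k < (n::nat) \<Longrightarrow> (\<Sum>i<n. f i * (if k = i then 1 else 0)) = (f k :: 'a::comm_ring_1)"
  using sum_delta_r[of k n f] by (simp add: eq_commute)

definition cw :: "nat \<Rightarrow> (nat \<Rightarrow> nat \<Rightarrow> 'a::comm_ring_1) \<Rightarrow> (nat \<Rightarrow> 'a) \<Rightarrow> nat \<Rightarrow> 'a" where
  "cw n B c = (\<lambda>j. \<Sum>i<n. c i * gen_row n B i j)"

lemma gen_code_cw: "gen_code n B = range (cw n B)"
  by (auto simp: gen_code_def cw_def)

lemma cw_low: "j < n \<Longrightarrow> cw n B c j = c j"
proof -
  assume j: "j < n"
  have "cw n B c j = (\<Sum>i<n. if i = j then c i else 0)"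
    unfolding cw_def gen_row_def using j by (intro sum.cong) auto
  also have "\<dots> = c j" using j by (simp add: sum.delta)
  finally show ?thesis .
qed

lemma cw_high: "k < n \<Longrightarrow> cw n B c (n + k) = (\<Sum>i<n. c i * B i k)"
  unfolding cw_def gen_row_def by (intro sum.cong) auto

lemma cw_out: "j \<ge> 2 * n \<Longrightarrow> cw n B c j = 0"
  unfolding cw_def gen_row_def by auto

lemma cw_vecs: "cw n B c \<in> vecs (2 * n)"
  by (auto simp: vecs_def cw_out)

lemma sum_split2: "(\<Sum>j<2*n. f j) = (\<Sum>j<n. f j) + (\<Sum>k<n. f (n + k))" for f :: "nat \<Rightarrow> 'a::comm_monoid_add"
proof -
  have "{..<2*n} = {..<n} \<union> {n..<2*n}" by auto
  hence "(\<Sum>j<2*n. f j) = sum f ({..<n} \<union> {n..<2*n})" by simp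
  also have "\<dots> = (\<Sum>j<n. f j) + (\<Sum>j\<in>{n..<2*n}. f j)"
    by (rule sum.union_disjoint) auto
  also have "(\<Sum>j\<in>{n..<2*n}. f j) = (\<Sum>k<n. f (n + k))"
  proof -
    have "{n..<2*n} = (\<lambda>k. n + k) ` {..<n}"
      apply (auto simp: image_iff)
      by (rule_tac x="x - n" in bexI) auto
    thus ?thesis by (simp add: sum.reindex)
  qed
  finally show ?thesis .
qed

lemma inner_cw: "inner_prod (2*n) (cw n B c) y =
   (\<Sum>i<n. c i * (y i + (\<Sum>k<n. B i k * y (n + k))))"
proof -
  have "inner_prod (2*n) (cw n B c) y = (\<Sum>j<n. c j * y j) + (\<Sum>k<n. (\<Sum>i<n. c i * B i k) * y (n + k))"
    unfolding inner_prod_def sum_split2 by (simp add: cw_low cw_high)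
  also have "(\<Sum>k<n. (\<Sum>i<n. c i * B i k) * y (n + k)) = (\<Sum>i<n. c i * (\<Sum>k<n. B i k * y (n + k)))"
    by (simp add: sum_distrib_left sum_distrib_right mult.assoc) (rule sum.swap)
  finally show ?thesis by (simp add: distrib_left sum.distrib)
qed

lemma dual_char: "y \<in> dual_code (2*n) (gen_code n B) \<longleftrightarrow>
   y \<in> vecs (2*n) \<and> (\<forall>i<n. y i + (\<Sum>k<n. B i k * y (n + k)) = 0)"
proof
  assume y: "y \<in> dual_code (2*n) (gen_code n B)"
  hence v: "y \<in> vecs (2*n)" and o: "\<And>c. inner_prod (2*n) (cw n B c) y = 0"
    by (auto simp: dual_code_def gen_code_cw)
  show "y \<in> vecs (2*n) \<and> (\<forall>i<n. y i + (\<Sum>k<n. B i k * y (n + k)) = 0)"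
  proof (intro conjI v allI impI)
    fix i assume i: "i < n"
    have "0 = inner_prod (2*n) (cw n B (\<lambda>j. if j = i then 1 else 0)) y" using o by simp
    also have "\<dots> = y i + (\<Sum>k<n. B i k * y (n + k))"
      unfolding inner_cw using i by (simp add: sum_delta_l)
    finally show "y i + (\<Sum>k<n. B i k * y (n + k)) = 0" by simp
  qed
next
  assume "y \<in> vecs (2*n) \<and> (\<forall>i<n. y i + (\<Sum>k<n. B i k * y (n + k)) = 0)"
  thus "y \<in> dual_code (2*n) (gen_code n B)"
    by (auto simp: dual_code_def gen_code_cw inner_cw)
qed

lemma self_dual_imp:
  assumes "self_dual (2*n) (gen_code n B)"
  shows "\<forall>i<n. \<forall>k<n. (if i = k then 1 else 0) + (\<Sum>l<n. B i l * B k l) = 0"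
    and "\<forall>k<n. \<forall>l<n. (\<Sum>i<n. B i k * B i l) = - (if l = k then 1 else 0)"
proof -
  have eq: "gen_code n B = dual_code (2*n) (gen_code n B)" using assms by (simp add: self_dual_def)
  show "\<forall>i<n. \<forall>k<n. (if i = k then 1 else 0) + (\<Sum>l<n. B i l * B k l) = 0"
  proof (intro allI impI)
    fix i k assume i: "i < n" and k: "k < n"
    let ?c = "\<lambda>j. if j = k then 1 else (0::'a)"
    have "cw n B ?c \<in> dual_code (2*n) (gen_code n B)" using eq by (auto simp: gen_code_cw)
    hence "cw n B ?c i + (\<Sum>l<n. B i l * cw n B ?c (n + l)) = 0" using i by (simp add: dual_char)
    moreover have "cw n B ?c i = (if i = k then 1 else 0)" using i by (simp add: cw_low)
    moreover have "(\<Sum>l<n. B i l * cw n B ?c (n + l)) = (\<Sum>l<n. B i l * B k l)"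
      by (intro sum.cong) (auto simp: cw_high sum_delta_l k)
    ultimately show "(if i = k then 1 else 0) + (\<Sum>l<n. B i l * B k l) = 0" by simp
  qed
  show "\<forall>k<n. \<forall>l<n. (\<Sum>i<n. B i k * B i l) = - (if l = k then 1 else 0)"
  proof (intro allI impI)
    fix k l assume k: "k < n" and l: "l < n"
    define y where "y = (\<lambda>j. if j < n then - B j k else if j < 2*n then (if j - n = k then 1 else 0) else (0::'a))"
    have yv: "y \<in> vecs (2*n)" by (auto simp: vecs_def y_def)
    have yh: "\<And>m. m < n \<Longrightarrow> y (n + m) = (if m = k then 1 else 0)" by (simp add: y_def)
    have "\<forall>i<n. y i + (\<Sum>m<n. B i m * y (n + m)) = 0"
    proof (intro allI impI)
      fix i assume "i < n"
      have "(\<Sum>m<n. B i m * y (n + m)) = (\<Sum>m<n. if m = k then B i k else 0)"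
        by (intro sum.cong) (auto simp: yh)
      thus "y i + (\<Sum>m<n. B i m * y (n + m)) = 0" using \<open>i < n\<close> k by (simp add: y_def sum.delta)
    qed
    hence "y \<in> dual_code (2*n) (gen_code n B)" using yv by (simp add: dual_char)
    hence "y \<in> gen_code n B" by (subst eq)
    then obtain c where c: "y = cw n B c" by (auto simp: gen_code_cw)
    have cl: "\<And>j. j < n \<Longrightarrow> c j = - B j k" using c by (metis cw_low y_def)
    have "y (n + l) = (\<Sum>i<n. c i * B i l)" using c l by (simp add: cw_high)
    also have "\<dots> = - (\<Sum>i<n. B i k * B i l)" by (simp add: cl sum_negf[symmetric])
    finally show "(\<Sum>i<n. B i k * B i l) = - (if l = k then 1 else 0)" using yh[OF l] by simp
  qed
qed

lemma self_dual_intro: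
  assumes r: "\<forall>i<n. \<forall>k<n. (if i = k then 1 else 0) + (\<Sum>l<n. B i l * B k l) = (0::'a::comm_ring_1)"
    and t: "\<forall>k<n. \<forall>l<n. (\<Sum>i<n. B i k * B i l) = - (if l = k then 1 else 0)"
  shows "self_dual (2*n) (gen_code n B)"
  unfolding self_dual_def
proof
  show "gen_code n B \<subseteq> dual_code (2*n) (gen_code n B)"
  proof
    fix y assume "y \<in> gen_code n B"
    then obtain c where c: "y = cw n B c" by (auto simp: gen_code_cw)
    have "\<forall>i<n. y i + (\<Sum>k<n. B i k * y (n + k)) = 0"
    proof (intro allI impI)
      fix i assume i: "i < n"
      have "(\<Sum>k<n. B i k * y (n + k)) = (\<Sum>k<n. B i k * (\<Sum>j<n. c j * B j k))"
        using c by (simp add: cw_high)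
      also have "\<dots> = (\<Sum>j<n. c j * (\<Sum>k<n. B i k * B j k))"
        by (simp add: sum_distrib_left mult.assoc mult.left_commute) (rule sum.swap)
      also have "\<dots> = (\<Sum>j<n. c j * (- (if i = j then 1 else 0)))"
        using r i by (intro sum.cong refl) (metis add_eq_0_iff lessThan_iff)
      also have "\<dots> = - c i" using i by (simp add: sum_negf sum_delta_r')
      finally show "y i + (\<Sum>k<n. B i k * y (n + k)) = 0" using c i by (simp add: cw_low)
    qed
    thus "y \<in> dual_code (2*n) (gen_code n B)" using c cw_vecs by (simp add: dual_char)
  qed
  show "dual_code (2*n) (gen_code n B) \<subseteq> gen_code n B"
  proof
    fix y assume "y \<in> dual_code (2*n) (gen_code n B)"
    hence v: "y \<in> vecs (2*n)" and o: "\<And>i. i < n \<Longrightarrow> y i = - (\<Sum>k<n. B i k * y (n + k))"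
      by (auto simp: dual_char eq_neg_iff_add_eq_0)
    have "y = cw n B y"
    proof
      fix j
      consider "j < n" | "n \<le> j" "j < 2*n" | "2*n \<le> j" by linarith
      thus "y j = cw n B y j"
      proof cases
        case 1 thus ?thesis by (simp add: cw_low)
      next
        case 3 thus ?thesis using v by (simp add: vecs_def cw_out)
      next
        case 2
        define l where "l = j - n"
        have l: "l < n" and jl: "j = n + l" using 2 by (auto simp: l_def)
        have "cw n B y j = (\<Sum>i<n. y i * B i l)" using l jl by (simp add: cw_high)
        also have "\<dots> = (\<Sum>i<n. - (\<Sum>k<n. B i k * y (n + k)) * B i l)" using o by simp
        also have "\<dots> = - (\<Sum>k<n. y (n + k) * (\<Sum>i<n. B i k * B i l))"
          by (simp add: sum_distrib_left sum_distrib_right sum_negf mult_ac) (rule sum.swap)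
        also have "\<dots> = - (\<Sum>k<n. y (n + k) * (- (if l = k then 1 else 0)))"
          using t l by (intro arg_cong[where f=uminus] sum.cong) auto
        also have "\<dots> = y (n + l)" using l by (simp add: sum_negf sum_delta_r')
        finally show ?thesis using jl by simp
      qed
    qed
    thus "y \<in> gen_code n B" by (auto simp: gen_code_cw)
  qed
qed

section \<open>Ring homomorphisms\<close>

locale rhom =
  fixes h :: "'a::comm_ring_1 \<Rightarrow> 'b::comm_ring_1"
  assumes hadd: "h (x + y) = h x + h y" and hmul: "h (x * y) = h x * h y"
    and h1: "h 1 = 1" and hsurj: "surj h"
begin

lemma h0: "h 0 = 0"
  using hadd[of 0 0] by simp

lemma hneg: "h (- x) = - h x"
  using hadd[of "-x" x] h0 by (simp add: eq_neg_iff_add_eq_0)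

lemma hsum: "h (sum f S) = (\<Sum>x\<in>S. h (f x))"
  by (induction S rule: infinite_finite_induct) (auto simp: h0 hadd)

lemma hdelta: "h (if P then 1 else 0) = (if P then 1 else 0)"
  by (simp add: h0 h1)

lemma hrow: "h (gen_row n B i j) = gen_row n (\<lambda>i k. h (B i k)) i j"
  by (simp add: gen_row_def h0 h1)

lemma himage: "(\<lambda>x j. h (x j)) ` gen_code n B = gen_code n (\<lambda>i k. h (B i k))"
proof
  show "(\<lambda>x j. h (x j)) ` gen_code n B \<subseteq> gen_code n (\<lambda>i k. h (B i k))"
    by (auto simp: gen_code_def hsum hmul hrow)
next
  show "gen_code n (\<lambda>i k. h (B i k)) \<subseteq> (\<lambda>x j. h (x j)) ` gen_code n B"
  proof
    fix y assume "y \<in> gen_code n (\<lambda>i k. h (B i k))"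
    then obtain c where c: "y = (\<lambda>j. \<Sum>i<n. c i * gen_row n (\<lambda>i k. h (B i k)) i j)"
      by (auto simp: gen_code_def)
    define d where "d = (\<lambda>i. inv h (c i))"
    have hd: "\<And>i. h (d i) = c i" by (simp add: d_def surj_f_inv_f[OF hsurj])
    have "y = (\<lambda>j. h ((\<lambda>j. \<Sum>i<n. d i * gen_row n B i j) j))"
      using c by (simp add: hsum hmul hrow hd)
    thus "y \<in> (\<lambda>x j. h (x j)) ` gen_code n B" by (auto simp: gen_code_def)
  qed
qed

lemma hself_dual:
  assumes "self_dual (2*n) (gen_code n B)"
  shows "self_dual (2*n) ((\<lambda>x j. h (x j)) ` gen_code n B)"
proof -
  note r = self_dual_imp(1)[OF assms] and t = self_dual_imp(2)[OF assms]
  show ?thesis unfolding himage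
  proof (rule self_dual_intro)
    show "\<forall>i<n. \<forall>k<n. (if i = k then 1 else 0) + (\<Sum>l<n. h (B i l) * h (B k l)) = 0"
    proof (intro allI impI)
      fix i k assume "i < n" "k < n"
      hence "h ((if i = k then 1 else 0) + (\<Sum>l<n. B i l * B k l)) = h 0" using r by simp
      thus "(if i = k then 1 else 0) + (\<Sum>l<n. h (B i l) * h (B k l)) = 0"
        by (simp add: hadd hsum hmul hdelta h0)
    qed
    show "\<forall>k<n. \<forall>l<n. (\<Sum>i<n. h (B i k) * h (B i l)) = - (if l = k then 1 else 0)"
    proof (intro allI impI)
      fix k l assume "k < n" "l < n"
      hence "h (\<Sum>i<n. B i k * B i l) = h (- (if l = k then 1 else 0))" using t by simp
      thus "(\<Sum>i<n. h (B i k) * h (B i l)) = - (if l = k then 1 else 0)"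
        by (simp add: hneg hsum hmul hdelta)
    qed
  qed
qed

end

lemma mod4_2: "(of_int (x mod 4) :: 2) = of_int x"
proof -
  have "x = x mod 4 + 4 * (x div 4)" by simp
  hence "(of_int x :: 2) = of_int (x mod 4) + 4 * of_int (x div 4)"
    by (metis of_int_add of_int_mult of_int_numeral)
  moreover have "(4::2) = 0" by simp
  ultimately show ?thesis by simp
qed

lemma red2_add: "red2 (a + b) = red2 a + red2 b"
proof -
  have "Rep_bit0 (a + b) = (Rep_bit0 a + Rep_bit0 b) mod 4"
    using bit0.Rep_Abs_mod[of "Rep_bit0 a + Rep_bit0 b", where 'a="2"] by (simp add: bit0.add_def)
  thus ?thesis unfolding red2_def by (simp only: mod4_2 of_int_add)
qed

lemma red2_mul: "red2 (a * b) = red2 a * red2 b"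
proof -
  have "Rep_bit0 (a * b) = (Rep_bit0 a * Rep_bit0 b) mod 4"
    using bit0.Rep_Abs_mod[of "Rep_bit0 a * Rep_bit0 b", where 'a="2"] by (simp add: bit0.mult_def)
  thus ?thesis unfolding red2_def by (simp only: mod4_2 of_int_mult)
qed

lemma red2_1: "red2 1 = 1"
  unfolding red2_def by (simp add: bit0.Rep_1)

lemma red2_0: "red2 0 = 0"
  unfolding red2_def by (simp add: bit0.Rep_0)

lemma red2_surj: "surj red2"
proof -
  have "\<And>y::2. y \<in> range red2"
  proof -
    fix y :: 2
    obtain z where z: "y = of_int z" "0 \<le> z" "z < int CARD(2)" by (rule bit0.cases)
    hence "z = 0 \<or> z = 1" by auto
    thus "y \<in> range red2" using z red2_0 red2_1 by (metis of_int_0 of_int_1 rangeI)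
  qed
  thus ?thesis by blast
qed

interpretation mu_h: rhom "re :: 4 dnum \<Rightarrow> 4"
proof
  fix x y :: "4 dnum"
  show "re (x + y) = re x + re y" by (simp add: plus_dnum_def)
  show "re (x * y) = re x * re y" by (simp add: times_dnum_def)
  show "re (1::4 dnum) = 1" by (simp add: one_dnum_def)
  show "surj (re :: 4 dnum \<Rightarrow> 4)" by (rule surjI[of re "\<lambda>a. Dual a 0"]) simp
qed

definition al :: "4 dnum \<Rightarrow> 2 dnum" where
  "al z = Dual (red2 (re z)) (red2 (im z))"

interpretation al_h: rhom al
proof
  fix x y :: "4 dnum"
  show "al (x + y) = al x + al y" by (simp add: al_def plus_dnum_def red2_add)
  show "al (x * y) = al x * al y" by (simp add: al_def times_dnum_def red2_add red2_mul)
  show "al 1 = 1" by (simp add: al_def one_dnum_def red2_1 red2_0)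
  show "surj al"
  proof (rule surjI)
    fix z :: "2 dnum"
    show "al (Dual (inv red2 (re z)) (inv red2 (im z))) = z"
      by (simp add: al_def surj_f_inv_f[OF red2_surj])
  qed
qed

theorem corollary4p5:
  fixes n :: nat and A :: "nat \<Rightarrow> nat \<Rightarrow> 4 dnum" and C :: "(nat \<Rightarrow> 4 dnum) set"
  assumes "C = gen_code n A"
    and "self_dual (2 * n) C"
  shows "self_dual (2 * n) (mu ` C) \<and> self_dual (2 * n) (alpha ` C)"
proof
  have mu_eq: "mu = (\<lambda>x j. re (x j))" by (simp add: mu_def fun_eq_iff)
  have al_eq: "alpha = (\<lambda>x j. al (x j))" by (simp add: alpha_def al_def fun_eq_iff)
  show "self_dual (2 * n) (mu ` C)"
    unfolding mu_eq using mu_h.hself_dual assms by simp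
  show "self_dual (2 * n) (alpha ` C)"
    unfolding al_eq using al_h.hself_dual assms by simp
qed

end
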